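(* Let $Z$ be a finite set, let $T_1,T_2$ be rooted $Z$-trees with $\mathrm{Seq}(T_1)=\mathrm{Seq}(T_2)$, and assume the subtree of $T_1$ rooted at the left child of its root has at least as many leaves as the subtree rooted at the right child. Let $Q_1,\dots,Q_k$ and $R_1,\dots,R_m$ be as defined in the context. Let $C\ge 4$ be a constant. Then at least one of the following holds: (i) there exist nodes $u\in T_1$, $v\in T_2$ and a leaf $x\in Z$ such that $x\notin \mathrm{Le}((T_1)_u)$, $x\notin\mathrm{Le}((T_2)_v)$ and $|\mathrm{Le}((T_1)_u)\cap \mathrm{Le}((T_2)_v)|\ge |Z|/C$; (ii) $|Q_j|\le \max(2|Z|/C,\,1)$ and $|R_l|\le\max(2|Z|/C,\,1)$ for all $1\le j\le k$, $1\le l\le m$.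
   Context: A rooted $Z$-tree is a binary rooted tree with a root of degree two (or a single node if $|Z|=1$), all other internal nodes of degree three, leaves bijectively labeled by $Z$, and each internal node having a designated left child and right child. For a node $v$, $T_v$ is the subtree rooted at $v$ and $\mathrm{Le}(\cdot)$ denotes the leaf set; the size $|T|$ of a tree is its number of leaves. $\mathrm{Seq}(T)$ is the left-to-right ordering of leaves given by the pre-order traversal of $T$ (visiting the left child before the right child). Let $P_1=(u_1,\dots,u_k)$ be the path in $T_1$ from its left-most leaf $u_1$ (first in $\mathrm{Seq}(T_1)$) to its root $u_k$; set $Q_1:=$ the one-leaf tree $u_1$ and, for $2\le j\le k$, $Q_j:=(T_1)_{c}$ where $c$ is the child of $u_j$ other than $u_{j-1}$. Let $P_2=(w_1,\dots,w_m)$ be the path in $T_2$ from its root $w_1$ to its right-most leaf $w_m$ (last in $\mathrm{Seq}(T_2)$); set $R_m:=$ the one-leaf tree $w_m$ and, for $1\le l<m$, $R_l:=(T_2)_{c}$ where $c$ is the child of $w_l$ other than $w_{l+1}$. *)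

theory Defs
  imports Complex_Main
begin

datatype 'a btree = Lf 'a | Nd "'a btree" "'a btree"

fun Seq :: "'a btree \<Rightarrow> 'a list" where
  "Seq (Lf x) = [x]"
| "Seq (Nd l r) = Seq l @ Seq r"

definition Le :: "'a btree \<Rightarrow> 'a set" where
  "Le T = set (Seq T)"

fun subtrees :: "'a btree \<Rightarrow> 'a btree set" where
  "subtrees (Lf x) = {Lf x}"
| "subtrees (Nd l r) = insert (Nd l r) (subtrees l \<union> subtrees r)"

definition is_Z_tree :: "'a set \<Rightarrow> 'a btree \<Rightarrow> bool" where
  "is_Z_tree Z T \<longleftrightarrow> distinct (Seq T) \<and> set (Seq T) = Z"

text \<open>Q_1,...,Q_k: the one-leaf tree u_1 (left-most leaf), followed by the
  off-path (right) children along the path from u_1 to the root, bottom-up.\<close>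
fun Qs :: "'a btree \<Rightarrow> 'a btree list" where
  "Qs (Lf x) = [Lf x]"
| "Qs (Nd l r) = Qs l @ [r]"

text \<open>R_1,...,R_m: the off-path (left) children along the path from the root
  to the right-most leaf w_m, top-down, followed by the one-leaf tree w_m.\<close>
fun Rs :: "'a btree \<Rightarrow> 'a btree list" where
  "Rs (Lf x) = [Lf x]"
| "Rs (Nd l r) = l # Rs r"

end

theory Submission
  imports Defs
begin

lemma Seq_ne: "Seq t \<noteq> []"
  by (induction t) auto

lemma self_sub[simp]: "t \<in> subtrees t"
  by (cases t) auto

lemma sub_Le: "u \<in> subtrees t \<Longrightarrow> Le u \<subseteq> Le t"
  by (induction t) (auto simp: Le_def)

lemma Qs_prop: "distinct (Seq t) \<Longrightarrow> Q \<in> set (Qs t) \<Longrightarrow>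
   Q \<in> subtrees t \<and> (card (Le Q) = 1 \<or> hd (Seq t) \<notin> Le Q)"
proof (induction t)
  case (Lf x) then show ?case by (simp add: Le_def)
next
  case (Nd l r)
  have h: "hd (Seq (Nd l r)) = hd (Seq l)" using Seq_ne[of l] by simp
  have hl: "hd (Seq l) \<in> set (Seq l)" using Seq_ne[of l] by simp
  show ?case
  proof (cases "Q = r")
    case True
    then show ?thesis using Nd.prems hl h by (auto simp: Le_def)
  next
    case False
    then have "Q \<in> set (Qs l)" using Nd.prems by auto
    then show ?thesis using Nd h by auto
  qed
qed

lemma Rs_prop: "distinct (Seq t) \<Longrightarrow> R \<in> set (Rs t) \<Longrightarrow>
   R \<in> subtrees t \<and> (card (Le R) = 1 \<or> last (Seq t) \<notin> Le R)"
proof (induction t)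
  case (Lf x) then show ?case by (simp add: Le_def)
next
  case (Nd l r)
  have h: "last (Seq (Nd l r)) = last (Seq r)" using Seq_ne[of r] by simp
  have hl: "last (Seq r) \<in> set (Seq r)" using Seq_ne[of r] by simp
  show ?case
  proof (cases "R = l")
    case True
    then show ?thesis using Nd.prems hl h by (auto simp: Le_def)
  next
    case False
    then have "R \<in> set (Rs r)" using Nd.prems by auto
    then show ?thesis using Nd h by auto
  qed
qed

theorem lemma1:
  fixes Z :: "'a set" and T1 T2 :: "'a btree" and C :: real
  assumes "finite Z"
    and "is_Z_tree Z T1" and "is_Z_tree Z T2"
    and "Seq T1 = Seq T2"
    and "\<And>l r. T1 = Nd l r \<Longrightarrow> card (Le r) \<le> card (Le l)"
    and "C \<ge> 4"
  shows "(\<exists>u\<in>subtrees T1. \<exists>v\<in>subtrees T2. \<exists>x\<in>Z.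
            x \<notin> Le u \<and> x \<notin> Le v \<and> real (card (Le u \<inter> Le v)) \<ge> real (card Z) / C)
       \<or> ((\<forall>Q\<in>set (Qs T1). real (card (Le Q)) \<le> max (2 * real (card Z) / C) 1)
          \<and> (\<forall>R\<in>set (Rs T2). real (card (Le R)) \<le> max (2 * real (card Z) / C) 1))"
proof (subst disj_commute, rule disjCI)
  define N where "N = real (card Z)"
  assume "\<not> (\<exists>u\<in>subtrees T1. \<exists>v\<in>subtrees T2. \<exists>x\<in>Z.
            x \<notin> Le u \<and> x \<notin> Le v \<and> real (card (Le u \<inter> Le v)) \<ge> real (card Z) / C)"
  then have nI: "\<And>u v x. u \<in> subtrees T1 \<Longrightarrow> v \<in> subtrees T2 \<Longrightarrow> x \<in> Z \<Longrightarrow>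
      x \<notin> Le u \<Longrightarrow> x \<notin> Le v \<Longrightarrow> real (card (Le u \<inter> Le v)) < N / C"
    unfolding N_def by force
  have C0: "C > 0" using assms(6) by simp
  have d1: "distinct (Seq T1)" and Z1: "Le T1 = Z"
    using assms(2) by (auto simp: is_Z_tree_def Le_def)
  have d2: "distinct (Seq T2)" and Z2: "Le T2 = Z"
    using assms(3) by (auto simp: is_Z_tree_def Le_def)
  show "(\<forall>Q\<in>set (Qs T1). real (card (Le Q)) \<le> max (2 * real (card Z) / C) 1)
          \<and> (\<forall>R\<in>set (Rs T2). real (card (Le R)) \<le> max (2 * real (card Z) / C) 1)"
  proof (cases T1)
    case (Lf x)
    then have "Seq T2 = [x]" using assms(4) by simp
    then have "T2 = Lf x" by (cases T2) (use Seq_ne in \<open>auto simp: append_eq_Cons_conv\<close>)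
    then show ?thesis using Lf by (simp add: Le_def)
  next
    case (Nd L Rr)
    obtain A B where T2: "T2 = Nd A B"
    proof (cases T2)
      case (Lf y)
      then have "Seq L @ Seq Rr = [y]" using Nd assms(4) by simp
      then show ?thesis using Seq_ne[of L] Seq_ne[of Rr]
        by (cases "Seq L") auto
    qed
    have eq: "Seq L @ Seq Rr = Seq A @ Seq B" using Nd T2 assms(4) by simp
    have dLR: "Le L \<inter> Le Rr = {}" using d1 Nd by (auto simp: Le_def)
    have dAB: "Le A \<inter> Le B = {}" using d2 T2 by (auto simp: Le_def)
    have ZLR: "Z = Le L \<union> Le Rr" using Z1 Nd by (auto simp: Le_def)
    have ZAB: "Z = Le A \<union> Le B" using Z2 T2 by (auto simp: Le_def)
    have fin: "finite (Le t)" for t :: "'a btree" by (simp add: Le_def)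
    define x0 where "x0 = hd (Seq L)"
    define y0 where "y0 = last (Seq Rr)"
    have x0L: "x0 \<in> Le L" using Seq_ne[of L] by (simp add: x0_def Le_def)
    have y0R: "y0 \<in> Le Rr" using Seq_ne[of Rr] by (simp add: y0_def Le_def)
    have x0A: "x0 \<in> Le A"
    proof -
      have "hd (Seq L @ Seq Rr) = hd (Seq A @ Seq B)" using eq by simp
      then have "x0 = hd (Seq A)" using Seq_ne[of L] Seq_ne[of A] by (simp add: x0_def)
      then show ?thesis using Seq_ne[of A] by (simp add: Le_def)
    qed
    have y0B: "y0 \<in> Le B"
    proof -
      have "last (Seq L @ Seq Rr) = last (Seq A @ Seq B)" using eq by simp
      then have "y0 = last (Seq B)" using Seq_ne[of Rr] Seq_ne[of B] by (simp add: y0_def)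
      then show ?thesis using Seq_ne[of B] by (simp add: Le_def)
    qed
    have x0B: "x0 \<notin> Le B" using x0A dAB by blast
    have y0L: "y0 \<notin> Le L" using y0R dLR by blast
    have y0A: "y0 \<notin> Le A" using y0B dAB by blast
    have x0R: "x0 \<notin> Le Rr" using x0L dLR by blast
    have x0Z: "x0 \<in> Z" and y0Z: "y0 \<in> Z" using ZLR x0L y0R by auto
    have sT1: "L \<in> subtrees T1" "Rr \<in> subtrees T1" using Nd by auto
    have sT2: "A \<in> subtrees T2" "B \<in> subtrees T2" using T2 by auto
    have a: "real (card (Le L \<inter> Le A)) < N / C"
      using nI[OF sT1(1) sT2(1) y0Z y0L y0A] .
    have b: "real (card (Le Rr \<inter> Le B)) < N / C"
      using nI[OF sT1(2) sT2(2) x0Z x0R x0B] .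
    have cardZ: "card Z = card (Le L) + card (Le Rr)"
      using ZLR dLR fin card_Un_disjoint by metis
    have LRle: "card (Le Rr) \<le> card (Le L)" using assms(5) Nd by blast
    have AL: "Le A \<subseteq> Le L"
    proof -
      obtain us where "Seq L = Seq A @ us \<and> us @ Seq Rr = Seq B \<or> Seq L @ us = Seq A \<and> Seq Rr = us @ Seq B"
        using eq append_eq_append_conv2[of "Seq L" "Seq Rr" "Seq A" "Seq B"] by blast
      then show ?thesis
      proof
        assume "Seq L = Seq A @ us \<and> us @ Seq Rr = Seq B"
        then show ?thesis by (auto simp: Le_def)
      next
        assume "Seq L @ us = Seq A \<and> Seq Rr = us @ Seq B"
        then have "Le L \<subseteq> Le A" unfolding Le_def by (metis set_append Un_upper1)
        then have "Le L \<inter> Le A = Le L" by blast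
        with a have "real (card (Le L)) < N / C" by simp
        moreover have "N / C \<le> N / 2" using C0 assms(6) unfolding N_def
          by (intro divide_left_mono) auto
        moreover have "N \<le> 2 * real (card (Le L))" using cardZ LRle unfolding N_def by simp
        ultimately show ?thesis by simp
      qed
    qed
    have ARr: "Le A \<inter> Le Rr = {}" using AL dLR by blast
    have RrB: "Le Rr \<subseteq> Le B" using ARr ZAB ZLR by blast
    have split: "real (card (Le t)) \<le> real (card (Le t \<inter> Le A)) + real (card (Le t \<inter> Le B))"
      if "Le t \<subseteq> Z" for t
    proof -
      have "Le t = (Le t \<inter> Le A) \<union> (Le t \<inter> Le B)" using that ZAB by blast
      then have "card (Le t) \<le> card (Le t \<inter> Le A) + card (Le t \<inter> Le B)"
        by (metis card_Un_le)
      then show ?thesis by linarith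
    qed
    have split2: "real (card (Le t)) \<le> real (card (Le L \<inter> Le t)) + real (card (Le Rr \<inter> Le t))"
      if "Le t \<subseteq> Z" for t
    proof -
      have "Le t = (Le L \<inter> Le t) \<union> (Le Rr \<inter> Le t)" using that ZLR by blast
      then have "card (Le t) \<le> card (Le L \<inter> Le t) + card (Le Rr \<inter> Le t)"
        by (metis card_Un_le)
      then show ?thesis by linarith
    qed
    have fin2: "N / C + N / C = 2 * N / C" by simp
    have Qok: "real (card (Le Q)) \<le> max (2 * N / C) 1" if Q: "Q \<in> set (Qs T1)" for Q
    proof (cases "Q = Rr")
      case True
      then have "Le Q \<inter> Le Rr \<inter> Le B = Le Q" using RrB by blast
      then show ?thesis using b True C0 by simp
    next
      case False
      then have QL: "Q \<in> set (Qs L)" using Q Nd by simp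
      have dL: "distinct (Seq L)" using d1 Nd by simp
      from Qs_prop[OF dL QL] have sQ: "Q \<in> subtrees L" and or: "card (Le Q) = 1 \<or> x0 \<notin> Le Q"
        by (auto simp: x0_def)
      have QLs: "Le Q \<subseteq> Le L" using sub_Le[OF sQ] .
      have sQ1: "Q \<in> subtrees T1" using sQ Nd by simp
      show ?thesis
      proof (cases "card (Le Q) = 1")
        case True then show ?thesis by simp
      next
        case False
        with or have "x0 \<notin> Le Q" by simp
        from nI[OF sQ1 sT2(2) x0Z this x0B] have "real (card (Le Q \<inter> Le B)) < N / C" .
        moreover have "real (card (Le Q \<inter> Le A)) \<le> real (card (Le L \<inter> Le A))"
          using QLs fin by (meson card_mono inf_mono order_refl of_nat_le_iff finite_Int)
        moreover have "real (card (Le Q)) \<le> real (card (Le Q \<inter> Le A)) + real (card (Le Q \<inter> Le B))"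
          using split QLs ZLR by blast
        ultimately show ?thesis using a by simp
      qed
    qed
    have Rok: "real (card (Le R)) \<le> max (2 * N / C) 1" if R: "R \<in> set (Rs T2)" for R
    proof (cases "R = A")
      case True
      then have "Le L \<inter> Le R = Le R" using AL by blast
      then show ?thesis using a True C0 by (simp add: Int_commute)
    next
      case False
      then have RB: "R \<in> set (Rs B)" using R T2 by simp
      have dB: "distinct (Seq B)" using d2 T2 by simp
      have yB: "y0 = last (Seq B)"
      proof -
        have "last (Seq L @ Seq Rr) = last (Seq A @ Seq B)" using eq by simp
        then show ?thesis using Seq_ne[of Rr] Seq_ne[of B] by (simp add: y0_def)
      qed
      from Rs_prop[OF dB RB] have sR: "R \<in> subtrees B" and or: "card (Le R) = 1 \<or> y0 \<notin> Le R"
        by (auto simp: yB)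
      have RBs: "Le R \<subseteq> Le B" using sub_Le[OF sR] .
      have sR2: "R \<in> subtrees T2" using sR T2 by simp
      show ?thesis
      proof (cases "card (Le R) = 1")
        case True then show ?thesis by simp
      next
        case False
        with or have "y0 \<notin> Le R" by simp
        from nI[OF sT1(1) sR2 y0Z y0L this] have "real (card (Le L \<inter> Le R)) < N / C" .
        moreover have "real (card (Le Rr \<inter> Le R)) \<le> real (card (Le Rr \<inter> Le B))"
          using RBs fin by (meson card_mono inf_mono order_refl of_nat_le_iff finite_Int)
        moreover have "real (card (Le R)) \<le> real (card (Le L \<inter> Le R)) + real (card (Le Rr \<inter> Le R))"
          using split2 RBs ZAB by blast
        ultimately show ?thesis using b by simp
      qed
    qed
    show ?thesis using Qok Rok unfolding N_def by blast
  qed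
qed

end
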